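(* For every integer $n\ge 4$, the disjunctive domination number of the torus grid graph $C_4\Box C_n$ is $$\gamma_2^d(C_4\Box C_n)=\begin{cases}\dfrac{n}{2}+1, & n\equiv 2\pmod 4,\\[2mm] \left\lceil \dfrac{n}{2}\right\rceil, & \text{otherwise}.\end{cases}$$
   Context: $C_k$ denotes the cycle on $k$ vertices, and $G\Box H$ is the Cartesian product: vertex set $V(G)\times V(H)$, with $(g,h)\sim(g',h')$ iff either $g=g'$ and $hh'\in E(H)$, or $h=h'$ and $gg'\in E(G)$. For a simple graph $\Gamma$ and a vertex $v$, let $\Gamma(v)$ be the set of vertices at distance $1$ from $v$ and $\Gamma_2(v)$ the set of vertices at distance exactly $2$ from $v$. A set $S\subseteq V(\Gamma)$ is a disjunctive dominating set if every vertex $v\notin S$ satisfies $|\Gamma(v)\cap S|\ge 1$ or $|\Gamma_2(v)\cap S|\ge 2$. The disjunctive domination number $\gamma_2^d(\Gamma)$ is the minimum cardinality of a disjunctive dominating set of $\Gamma$. *)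

theory Defs
  imports Main
begin

text \<open>A simple graph is given by a vertex set V and an adjacency relation E
  (assumed symmetric and irreflexive on V for the graphs used below).\<close>

definition nbhd :: "'a set \<Rightarrow> ('a \<Rightarrow> 'a \<Rightarrow> bool) \<Rightarrow> 'a \<Rightarrow> 'a set" where
  "nbhd V E v = {w \<in> V. E v w}"

definition nbhd2 :: "'a set \<Rightarrow> ('a \<Rightarrow> 'a \<Rightarrow> bool) \<Rightarrow> 'a \<Rightarrow> 'a set" where
  "nbhd2 V E v = {w \<in> V. w \<noteq> v \<and> \<not> E v w \<and> (\<exists>u\<in>V. E v u \<and> E u w)}"

definition disj_dom_set :: "'a set \<Rightarrow> ('a \<Rightarrow> 'a \<Rightarrow> bool) \<Rightarrow> 'a set \<Rightarrow> bool" where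
  "disj_dom_set V E S \<longleftrightarrow> S \<subseteq> V \<and>
     (\<forall>v\<in>V - S. card (nbhd V E v \<inter> S) \<ge> 1 \<or> card (nbhd2 V E v \<inter> S) \<ge> 2)"

definition disj_dom_num :: "'a set \<Rightarrow> ('a \<Rightarrow> 'a \<Rightarrow> bool) \<Rightarrow> nat" where
  "disj_dom_num V E = (LEAST k. \<exists>S. disj_dom_set V E S \<and> card S = k)"

definition cycle_V :: "nat \<Rightarrow> nat set" where
  "cycle_V k = {0..<k}"

definition cycle_E :: "nat \<Rightarrow> nat \<Rightarrow> nat \<Rightarrow> bool" where
  "cycle_E k i j \<longleftrightarrow> i < k \<and> j < k \<and> (j = (i + 1) mod k \<or> i = (j + 1) mod k)"

definition cart_V :: "'a set \<Rightarrow> 'b set \<Rightarrow> ('a \<times> 'b) set" where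
  "cart_V V1 V2 = V1 \<times> V2"

definition cart_E :: "('a \<Rightarrow> 'a \<Rightarrow> bool) \<Rightarrow> ('b \<Rightarrow> 'b \<Rightarrow> bool) \<Rightarrow> 'a \<times> 'b \<Rightarrow> 'a \<times> 'b \<Rightarrow> bool" where
  "cart_E E1 E2 p q \<longleftrightarrow>
     (fst p = fst q \<and> E2 (snd p) (snd q)) \<or> (snd p = snd q \<and> E1 (fst p) (fst q))"

end

theory Submission
  imports Defs
begin


definition ind :: "bool \<Rightarrow> int" where "ind b = (if b then 1 else 0)"

definition ld :: "(int \<Rightarrow> int \<Rightarrow> bool) \<Rightarrow> int \<Rightarrow> int \<Rightarrow> bool" where
  "ld x k i \<longleftrightarrow> x k i \<or> x k ((i+1) mod 4) \<or> x k ((i+3) mod 4) \<or> x (k-1) i \<or> x (k+1) i \<or>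
     2 \<le> ind (x k ((i+2) mod 4)) + ind (x (k-1) ((i+1) mod 4)) + ind (x (k-1) ((i+3) mod 4))
        + ind (x (k+1) ((i+1) mod 4)) + ind (x (k+1) ((i+3) mod 4)) + ind (x (k-2) i) + ind (x (k+2) i)"

definition ldc :: "(int \<Rightarrow> int \<Rightarrow> bool) \<Rightarrow> int \<Rightarrow> bool" where
  "ldc x k \<longleftrightarrow> ld x k 0 \<and> ld x k 1 \<and> ld x k 2 \<and> ld x k 3"

definition cnt :: "(int \<Rightarrow> int \<Rightarrow> bool) \<Rightarrow> int \<Rightarrow> int" where
  "cnt x k = ind (x k 0) + ind (x k 1) + ind (x k 2) + ind (x k 3)"

definition WW :: "(int \<Rightarrow> int \<Rightarrow> bool) \<Rightarrow> int \<Rightarrow> int" where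
  "WW x k = 6 * cnt x k + 4 * (cnt x (k-1) + cnt x (k+1)) + cnt x (k-2) + cnt x (k+2)"

declare [[smt_timeout = 600]]

lemma A_bool: fixes xm30v xm31v xm32v xm33v xm20v xm21v xm22v xm23v xm10v xm11v xm12v xm13v xp00v xp01v xp02v xp03v xp10v xp11v xp12v xp13v xp20v xp21v xp22v xp23v xp30v xp31v xp32v xp33v :: bool
  assumes "(xm10v \<or> xm11v \<or> xm13v \<or> xm20v \<or> xp00v \<or> 2 \<le> ((if xm12v then 1 else 0) + (if xm21v then 1 else 0) + (if xm23v then 1 else 0) + (if xp01v then 1 else 0) + (if xp03v then 1 else 0) + (if xm30v then 1 else 0) + (if xp10v then 1 else 0)::int)) \<and> (xm11v \<or> xm12v \<or> xm10v \<or> xm21v \<or> xp01v \<or> 2 \<le> ((if xm13v then 1 else 0) + (if xm22v then 1 else 0) + (if xm20v then 1 else 0) + (if xp02v then 1 else 0) + (if xp00v then 1 else 0) + (if xm31v then 1 else 0) + (if xp11v then 1 else 0)::int)) \<and> (xm12v \<or> xm13v \<or> xm11v \<or> xm22v \<or> xp02v \<or> 2 \<le> ((if xm10v then 1 else 0) + (if xm23v then 1 else 0) + (if xm21v then 1 else 0) + (if xp03v then 1 else 0) + (if xp01v then 1 else 0) + (if xm32v then 1 else 0) + (if xp12v then 1 else 0)::int)) \<and> (xm13v \<or> xm10v \<or> xm12v \<or> xm23v \<or> xp03v \<or> 2 \<le> ((if xm11v then 1 else 0) + (if xm20v then 1 else 0) + (if xm22v then 1 else 0) + (if xp00v then 1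 else 0) + (if xp02v then 1 else 0) + (if xm33v then 1 else 0) + (if xp13v then 1 else 0)::int))" "(xp00v \<or> xp01v \<or> xp03v \<or> xm10v \<or> xp10v \<or> 2 \<le> ((if xp02v then 1 else 0) + (if xm11v then 1 else 0) + (if xm13v then 1 else 0) + (if xp11v then 1 else 0) + (if xp13v then 1 else 0) + (if xm20v then 1 else 0) + (if xp20v then 1 else 0)::int)) \<and> (xp01v \<or> xp02v \<or> xp00v \<or> xm11v \<or> xp11v \<or> 2 \<le> ((if xp03v then 1 else 0) + (if xm12v then 1 else 0) + (if xm10v then 1 else 0) + (if xp12v then 1 else 0) + (if xp10v then 1 else 0) + (if xm21v then 1 else 0) + (if xp21v then 1 else 0)::int)) \<and> (xp02v \<or> xp03v \<or> xp01v \<or> xm12v \<or> xp12v \<or> 2 \<le> ((if xp00v then 1 else 0) + (if xm13v then 1 else 0) + (if xm11v then 1 else 0) + (if xp13v then 1 else 0) + (if xp11v then 1 else 0) + (if xm22v then 1 else 0) + (if xp22v then 1 else 0)::int)) \<and> (xp03v \<or> xp00v \<or> xp02v \<or> xm13v \<or> xp13v \<or> 2 \<le> ((if xp01v then 1 else 0) + (if xm10v then 1 else 0) + (if xm12v then 1 else 0) + (if xp10v then 1 else 0) + (if xp12v then 1 else 0) + (if xm23v then 1 else 0) + (if xp23v then 1 else 0)::int))" "(xp10v \<or> xp11v \<or> xp13v \<or> xp00v \<or> xp20v \<or> 2 \<le> ((if xp12v then 1 else 0) + (if xp01v then 1 else 0) + (if xp03v then 1 else 0) + (if xp21v then 1 else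 0) + (if xp23v then 1 else 0) + (if xm10v then 1 else 0) + (if xp30v then 1 else 0)::int)) \<and> (xp11v \<or> xp12v \<or> xp10v \<or> xp01v \<or> xp21v \<or> 2 \<le> ((if xp13v then 1 else 0) + (if xp02v then 1 else 0) + (if xp00v then 1 else 0) + (if xp22v then 1 else 0) + (if xp20v then 1 else 0) + (if xm11v then 1 else 0) + (if xp31v then 1 else 0)::int)) \<and> (xp12v \<or> xp13v \<or> xp11v \<or> xp02v \<or> xp22v \<or> 2 \<le> ((if xp10v then 1 else 0) + (if xp03v then 1 else 0) + (if xp01v then 1 else 0) + (if xp23v then 1 else 0) + (if xp21v then 1 else 0) + (if xm12v then 1 else 0) + (if xp32v then 1 else 0)::int)) \<and> (xp13v \<or> xp10v \<or> xp12v \<or> xp03v \<or> xp23v \<or> 2 \<le> ((if xp11v then 1 else 0) + (if xp00v then 1 else 0) + (if xp02v then 1 else 0) + (if xp20v then 1 else 0) + (if xp22v then 1 else 0) + (if xm13v then 1 else 0) + (if xp33v then 1 else 0)::int))"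
  shows "(8::int) \<le> 6 * ((if xp00v then 1 else 0) + (if xp01v then 1 else 0) + (if xp02v then 1 else 0) + (if xp03v then 1 else 0)) + 4 * (((if xm10v then 1 else 0) + (if xm11v then 1 else 0) + (if xm12v then 1 else 0) + (if xm13v then 1 else 0)) + ((if xp10v then 1 else 0) + (if xp11v then 1 else 0) + (if xp12v then 1 else 0) + (if xp13v then 1 else 0))) + ((if xm20v then 1 else 0) + (if xm21v then 1 else 0) + (if xm22v then 1 else 0) + (if xm23v then 1 else 0)) + ((if xp20v then 1 else 0) + (if xp21v then 1 else 0) + (if xp22v then 1 else 0) + (if xp23v then 1 else 0))"
  using assms by (smt (z3))

lemma B_bool: fixes xm40v xm41v xm42v xm43v xm30v xm31v xm32v xm33v xm20v xm21v xm22v xm23v xm10v xm11v xm12v xm13v xp00v xp01v xp02v xp03v xp10v xp11v xp12v xp13v xp20v xp21v xp22v xp23v xp30v xp31v xp32v xp33v xp40v xp41v xp42v xp43v :: bool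
  assumes "(xm20v \<or> xm21v \<or> xm23v \<or> xm30v \<or> xm10v \<or> 2 \<le> ((if xm22v then 1 else 0) + (if xm31v then 1 else 0) + (if xm33v then 1 else 0) + (if xm11v then 1 else 0) + (if xm13v then 1 else 0) + (if xm40v then 1 else 0) + (if xp00v then 1 else 0)::int)) \<and> (xm21v \<or> xm22v \<or> xm20v \<or> xm31v \<or> xm11v \<or> 2 \<le> ((if xm23v then 1 else 0) + (if xm32v then 1 else 0) + (if xm30v then 1 else 0) + (if xm12v then 1 else 0) + (if xm10v then 1 else 0) + (if xm41v then 1 else 0) + (if xp01v then 1 else 0)::int)) \<and> (xm22v \<or> xm23v \<or> xm21v \<or> xm32v \<or> xm12v \<or> 2 \<le> ((if xm20v then 1 else 0) + (if xm33v then 1 else 0) + (if xm31v then 1 else 0) + (if xm13v then 1 else 0) + (if xm11v then 1 else 0) + (if xm42v then 1 else 0) + (if xp02v then 1 else 0)::int)) \<and> (xm23v \<or> xm20v \<or> xm22v \<or> xm33v \<or> xm13v \<or> 2 \<le> ((if xm21v then 1 else 0) + (if xm30v then 1 else 0) + (if xm32v then 1 else 0) + (if xm10v then 1 else 0) + (if xm12v then 1 else 0) + (if xm43v then 1 else 0) + (if xp03v then 1 else 0)::int))" "(xm10v \<or> xm11v \<or> xm13v \<or> xm20v \<or> xp00v \<or> 2 \<le> ((if xm12v then 1 else 0) + (if xm21v then 1 else 0) + (if xm23v then 1 else 0) + (if xp01v then 1 else 0) + (if xp03v then 1 else 0) + (if xm30v then 1 else 0) + (if xp10v then 1 else 0)::int))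 \<and> (xm11v \<or> xm12v \<or> xm10v \<or> xm21v \<or> xp01v \<or> 2 \<le> ((if xm13v then 1 else 0) + (if xm22v then 1 else 0) + (if xm20v then 1 else 0) + (if xp02v then 1 else 0) + (if xp00v then 1 else 0) + (if xm31v then 1 else 0) + (if xp11v then 1 else 0)::int)) \<and> (xm12v \<or> xm13v \<or> xm11v \<or> xm22v \<or> xp02v \<or> 2 \<le> ((if xm10v then 1 else 0) + (if xm23v then 1 else 0) + (if xm21v then 1 else 0) + (if xp03v then 1 else 0) + (if xp01v then 1 else 0) + (if xm32v then 1 else 0) + (if xp12v then 1 else 0)::int)) \<and> (xm13v \<or> xm10v \<or> xm12v \<or> xm23v \<or> xp03v \<or> 2 \<le> ((if xm11v then 1 else 0) + (if xm20v then 1 else 0) + (if xm22v then 1 else 0) + (if xp00v then 1 else 0) + (if xp02v then 1 else 0) + (if xm33v then 1 else 0) + (if xp13v then 1 else 0)::int))" "(xp00v \<or> xp01v \<or> xp03v \<or> xm10v \<or> xp10v \<or> 2 \<le> ((if xp02v then 1 else 0) + (if xm11v then 1 else 0) + (if xm13v then 1 else 0) + (if xp11v then 1 else 0) + (if xp13v then 1 else 0) + (if xm20v then 1 else 0) + (if xp20v then 1 else 0)::int)) \<and> (xp01v \<or> xp02v \<or> xp00v \<or> xm11v \<or> xp11v \<or> 2 \<le> ((if xp03v then 1 else 0) + (if xm12v then 1 else 0) + (if xm10v then 1 else 0) + (if xp12v then 1 else 0) + (if xp10v then 1 else 0) + (if xm21v then 1 else 0) + (if xp21v then 1 else 0)::int))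 \<and> (xp02v \<or> xp03v \<or> xp01v \<or> xm12v \<or> xp12v \<or> 2 \<le> ((if xp00v then 1 else 0) + (if xm13v then 1 else 0) + (if xm11v then 1 else 0) + (if xp13v then 1 else 0) + (if xp11v then 1 else 0) + (if xm22v then 1 else 0) + (if xp22v then 1 else 0)::int)) \<and> (xp03v \<or> xp00v \<or> xp02v \<or> xm13v \<or> xp13v \<or> 2 \<le> ((if xp01v then 1 else 0) + (if xm10v then 1 else 0) + (if xm12v then 1 else 0) + (if xp10v then 1 else 0) + (if xp12v then 1 else 0) + (if xm23v then 1 else 0) + (if xp23v then 1 else 0)::int))" "(xp10v \<or> xp11v \<or> xp13v \<or> xp00v \<or> xp20v \<or> 2 \<le> ((if xp12v then 1 else 0) + (if xp01v then 1 else 0) + (if xp03v then 1 else 0) + (if xp21v then 1 else 0) + (if xp23v then 1 else 0) + (if xm10v then 1 else 0) + (if xp30v then 1 else 0)::int)) \<and> (xp11v \<or> xp12v \<or> xp10v \<or> xp01v \<or> xp21v \<or> 2 \<le> ((if xp13v then 1 else 0) + (if xp02v then 1 else 0) + (if xp00v then 1 else 0) + (if xp22v then 1 else 0) + (if xp20v then 1 else 0) + (if xm11v then 1 else 0) + (if xp31v then 1 else 0)::int)) \<and> (xp12v \<or> xp13v \<or> xp11v \<or> xp02v \<or> xp22v \<or> 2 \<le> ((if xp10v then 1 else 0) + (if xp03v then 1 else 0) + (if xp01v then 1 else 0) + (if xp23v then 1 else 0) + (if xp21v then 1 else 0) + (if xm12v then 1 else 0) + (if xp32v then 1 else 0)::int))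 \<and> (xp13v \<or> xp10v \<or> xp12v \<or> xp03v \<or> xp23v \<or> 2 \<le> ((if xp11v then 1 else 0) + (if xp00v then 1 else 0) + (if xp02v then 1 else 0) + (if xp20v then 1 else 0) + (if xp22v then 1 else 0) + (if xm13v then 1 else 0) + (if xp33v then 1 else 0)::int))" "(xp20v \<or> xp21v \<or> xp23v \<or> xp10v \<or> xp30v \<or> 2 \<le> ((if xp22v then 1 else 0) + (if xp11v then 1 else 0) + (if xp13v then 1 else 0) + (if xp31v then 1 else 0) + (if xp33v then 1 else 0) + (if xp00v then 1 else 0) + (if xp40v then 1 else 0)::int)) \<and> (xp21v \<or> xp22v \<or> xp20v \<or> xp11v \<or> xp31v \<or> 2 \<le> ((if xp23v then 1 else 0) + (if xp12v then 1 else 0) + (if xp10v then 1 else 0) + (if xp32v then 1 else 0) + (if xp30v then 1 else 0) + (if xp01v then 1 else 0) + (if xp41v then 1 else 0)::int)) \<and> (xp22v \<or> xp23v \<or> xp21v \<or> xp12v \<or> xp32v \<or> 2 \<le> ((if xp20v then 1 else 0) + (if xp13v then 1 else 0) + (if xp11v then 1 else 0) + (if xp33v then 1 else 0) + (if xp31v then 1 else 0) + (if xp02v then 1 else 0) + (if xp42v then 1 else 0)::int)) \<and> (xp23v \<or> xp20v \<or> xp22v \<or> xp13v \<or> xp33v \<or> 2 \<le> ((if xp21v then 1 else 0) + (if xp10v then 1 else 0) + (if xp12v then 1 else 0) + (if xp30v then 1 else 0) + (if xp32v then 1 else 0) + (if xp03v then 1 else 0) + (if xp43v then 1 else 0)::int))"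 "(8::int) = 6 * ((if xm10v then 1 else 0) + (if xm11v then 1 else 0) + (if xm12v then 1 else 0) + (if xm13v then 1 else 0)) + 4 * (((if xm20v then 1 else 0) + (if xm21v then 1 else 0) + (if xm22v then 1 else 0) + (if xm23v then 1 else 0)) + ((if xp00v then 1 else 0) + (if xp01v then 1 else 0) + (if xp02v then 1 else 0) + (if xp03v then 1 else 0))) + ((if xm30v then 1 else 0) + (if xm31v then 1 else 0) + (if xm32v then 1 else 0) + (if xm33v then 1 else 0)) + ((if xp10v then 1 else 0) + (if xp11v then 1 else 0) + (if xp12v then 1 else 0) + (if xp13v then 1 else 0))" "(8::int) = 6 * ((if xp00v then 1 else 0) + (if xp01v then 1 else 0) + (if xp02v then 1 else 0) + (if xp03v then 1 else 0)) + 4 * (((if xm10v then 1 else 0) + (if xm11v then 1 else 0) + (if xm12v then 1 else 0) + (if xm13v then 1 else 0)) + ((if xp10v then 1 else 0) + (if xp11v then 1 else 0) + (if xp12v then 1 else 0) + (if xp13v then 1 else 0))) + ((if xm20v then 1 else 0) + (if xm21v then 1 else 0) + (if xm22v then 1 else 0) + (if xm23v then 1 else 0)) + ((if xp20v then 1 else 0) + (if xp21v then 1 else 0) + (if xp22v then 1 else 0) + (if xp23v then 1 else 0))" "(8::int) = 6 * ((if xp10v then 1 else 0) + (if xp11v then 1 else 0) + (if xp12v then 1 else 0) + (if xp13v then 1 else 0)) + 4 * (((if xp00v then 1 else 0) + (if xp01v then 1 else 0) + (if xp02v then 1 else 0) + (if xp03v then 1 else 0)) + ((if xp20v then 1 else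 0) + (if xp21v then 1 else 0) + (if xp22v then 1 else 0) + (if xp23v then 1 else 0))) + ((if xm10v then 1 else 0) + (if xm11v then 1 else 0) + (if xm12v then 1 else 0) + (if xm13v then 1 else 0)) + ((if xp30v then 1 else 0) + (if xp31v then 1 else 0) + (if xp32v then 1 else 0) + (if xp33v then 1 else 0))"
  shows "(xp20v = xp02v) \<and> (xp21v = xp03v) \<and> (xp22v = xp00v) \<and> (xp23v = xp01v)"
  using assms by (smt (z3))

lemma C_bool: fixes xm30v xm31v xm32v xm33v xm20v xm21v xm22v xm23v xm10v xm11v xm12v xm13v xp00v xp01v xp02v xp03v xp10v xp11v xp12v xp13v xp20v xp21v xp22v xp23v xp30v xp31v xp32v xp33v xp40v xp41v xp42v xp43v :: bool
  assumes "(xm32v = xm30v) \<and> (xm33v = xm31v) \<and> (xm22v = xm20v) \<and> (xm23v = xm21v) \<and> (xm12v = xm10v) \<and> (xm13v = xm11v) \<and> (xp02v = xp00v) \<and> (xp03v = xp01v) \<and> (xp12v = xp10v) \<and> (xp13v = xp11v) \<and> (xp22v = xp20v) \<and> (xp23v = xp21v) \<and> (xp32v = xp30v) \<and> (xp33v = xp31v) \<and> (xp42v = xp40v) \<and> (xp43v = xp41v)" "(xm10v \<or> xm11v \<or> xm13v \<or> xm20v \<or> xp00v \<or> 2 \<le> ((if xm12v then 1 else 0) + (if xm21v then 1 else 0) + (if xm23v then 1 else 0) + (if xp01v then 1 else 0) + (if xp03v then 1 else 0) + (if xm30v then 1 else 0) + (if xp10v then 1 else 0)::int)) \<and> (xm11v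 \<or> xm12v \<or> xm10v \<or> xm21v \<or> xp01v \<or> 2 \<le> ((if xm13v then 1 else 0) + (if xm22v then 1 else 0) + (if xm20v then 1 else 0) + (if xp02v then 1 else 0) + (if xp00v then 1 else 0) + (if xm31v then 1 else 0) + (if xp11v then 1 else 0)::int)) \<and> (xm12v \<or> xm13v \<or> xm11v \<or> xm22v \<or> xp02v \<or> 2 \<le> ((if xm10v then 1 else 0) + (if xm23v then 1 else 0) + (if xm21v then 1 else 0) + (if xp03v then 1 else 0) + (if xp01v then 1 else 0) + (if xm32v then 1 else 0) + (if xp12v then 1 else 0)::int)) \<and> (xm13v \<or> xm10v \<or> xm12v \<or> xm23v \<or> xp03v \<or> 2 \<le> ((if xm11v then 1 else 0) + (if xm20v then 1 else 0) + (if xm22v then 1 else 0) + (if xp00v then 1 else 0) + (if xp02v then 1 else 0) + (if xm33v then 1 else 0) + (if xp13v then 1 else 0)::int))" "(xp00v \<or> xp01v \<or> xp03v \<or> xm10v \<or> xp10v \<or> 2 \<le> ((if xp02v then 1 else 0) + (if xm11v then 1 else 0) + (if xm13v then 1 else 0) + (if xp11v then 1 else 0) + (if xp13v then 1 else 0) + (if xm20v then 1 else 0) + (if xp20v then 1 else 0)::int)) \<and> (xp01v \<or> xp02v \<or> xp00v \<or> xm11v \<or> xp11v \<or> 2 \<le> ((if xp03v then 1 else 0) + (if xm12v then 1 else 0) + (if xm10v then 1 else 0) + (if xp12v then 1 else 0) + (if xp10v then 1 else 0) + (if xm21v then 1 else 0) + (if xp21v then 1 else 0)::int)) \<and> (xp02v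 \<or> xp03v \<or> xp01v \<or> xm12v \<or> xp12v \<or> 2 \<le> ((if xp00v then 1 else 0) + (if xm13v then 1 else 0) + (if xm11v then 1 else 0) + (if xp13v then 1 else 0) + (if xp11v then 1 else 0) + (if xm22v then 1 else 0) + (if xp22v then 1 else 0)::int)) \<and> (xp03v \<or> xp00v \<or> xp02v \<or> xm13v \<or> xp13v \<or> 2 \<le> ((if xp01v then 1 else 0) + (if xm10v then 1 else 0) + (if xm12v then 1 else 0) + (if xp10v then 1 else 0) + (if xp12v then 1 else 0) + (if xm23v then 1 else 0) + (if xp23v then 1 else 0)::int))" "(xp10v \<or> xp11v \<or> xp13v \<or> xp00v \<or> xp20v \<or> 2 \<le> ((if xp12v then 1 else 0) + (if xp01v then 1 else 0) + (if xp03v then 1 else 0) + (if xp21v then 1 else 0) + (if xp23v then 1 else 0) + (if xm10v then 1 else 0) + (if xp30v then 1 else 0)::int)) \<and> (xp11v \<or> xp12v \<or> xp10v \<or> xp01v \<or> xp21v \<or> 2 \<le> ((if xp13v then 1 else 0) + (if xp02v then 1 else 0) + (if xp00v then 1 else 0) + (if xp22v then 1 else 0) + (if xp20v then 1 else 0) + (if xm11v then 1 else 0) + (if xp31v then 1 else 0)::int)) \<and> (xp12v \<or> xp13v \<or> xp11v \<or> xp02v \<or> xp22v \<or> 2 \<le> ((if xp10v then 1 else 0) + (if xp03v then 1 else 0) + (if xp01v then 1 else 0) + (if xp23v then 1 else 0) + (if xp21v then 1 else 0) + (if xm12v then 1 else 0) + (if xp32v then 1 else 0)::int)) \<and> (xp13v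 \<or> xp10v \<or> xp12v \<or> xp03v \<or> xp23v \<or> 2 \<le> ((if xp11v then 1 else 0) + (if xp00v then 1 else 0) + (if xp02v then 1 else 0) + (if xp20v then 1 else 0) + (if xp22v then 1 else 0) + (if xm13v then 1 else 0) + (if xp33v then 1 else 0)::int))" "(xp20v \<or> xp21v \<or> xp23v \<or> xp10v \<or> xp30v \<or> 2 \<le> ((if xp22v then 1 else 0) + (if xp11v then 1 else 0) + (if xp13v then 1 else 0) + (if xp31v then 1 else 0) + (if xp33v then 1 else 0) + (if xp00v then 1 else 0) + (if xp40v then 1 else 0)::int)) \<and> (xp21v \<or> xp22v \<or> xp20v \<or> xp11v \<or> xp31v \<or> 2 \<le> ((if xp23v then 1 else 0) + (if xp12v then 1 else 0) + (if xp10v then 1 else 0) + (if xp32v then 1 else 0) + (if xp30v then 1 else 0) + (if xp01v then 1 else 0) + (if xp41v then 1 else 0)::int)) \<and> (xp22v \<or> xp23v \<or> xp21v \<or> xp12v \<or> xp32v \<or> 2 \<le> ((if xp20v then 1 else 0) + (if xp13v then 1 else 0) + (if xp11v then 1 else 0) + (if xp33v then 1 else 0) + (if xp31v then 1 else 0) + (if xp02v then 1 else 0) + (if xp42v then 1 else 0)::int)) \<and> (xp23v \<or> xp20v \<or> xp22v \<or> xp13v \<or> xp33v \<or> 2 \<le> ((if xp21v then 1 else 0) + (if xp10v then 1 else 0) + (if xp12v then 1 else 0) + (if xp30v then 1 else 0) + (if xp32v then 1 else 0) + (if xp03v then 1 else 0) + (if xp43v then 1 else 0)::int))" "(8::int)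 = 6 * ((if xp00v then 1 else 0) + (if xp01v then 1 else 0) + (if xp02v then 1 else 0) + (if xp03v then 1 else 0)) + 4 * (((if xm10v then 1 else 0) + (if xm11v then 1 else 0) + (if xm12v then 1 else 0) + (if xm13v then 1 else 0)) + ((if xp10v then 1 else 0) + (if xp11v then 1 else 0) + (if xp12v then 1 else 0) + (if xp13v then 1 else 0))) + ((if xm20v then 1 else 0) + (if xm21v then 1 else 0) + (if xm22v then 1 else 0) + (if xm23v then 1 else 0)) + ((if xp20v then 1 else 0) + (if xp21v then 1 else 0) + (if xp22v then 1 else 0) + (if xp23v then 1 else 0))" "(8::int) = 6 * ((if xp10v then 1 else 0) + (if xp11v then 1 else 0) + (if xp12v then 1 else 0) + (if xp13v then 1 else 0)) + 4 * (((if xp00v then 1 else 0) + (if xp01v then 1 else 0) + (if xp02v then 1 else 0) + (if xp03v then 1 else 0)) + ((if xp20v then 1 else 0) + (if xp21v then 1 else 0) + (if xp22v then 1 else 0) + (if xp23v then 1 else 0))) + ((if xm10v then 1 else 0) + (if xm11v then 1 else 0) + (if xm12v then 1 else 0) + (if xm13v then 1 else 0)) + ((if xp30v then 1 else 0) + (if xp31v then 1 else 0) + (if xp32v then 1 else 0) + (if xp33v then 1 else 0))"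
  shows "False"
  using assms by (smt (z3))

lemma localA:
  assumes "ldc x (-1)" "ldc x 0" "ldc x 1"
  shows "8 \<le> WW x 0"
proof -
  have "(8::int) \<le> 6 * ((if (x (0) 0) then 1 else 0) + (if (x (0) 1) then 1 else 0) + (if (x (0) 2) then 1 else 0) + (if (x (0) 3) then 1 else 0)) + 4 * (((if (x (-1) 0) then 1 else 0) + (if (x (-1) 1) then 1 else 0) + (if (x (-1) 2) then 1 else 0) + (if (x (-1) 3) then 1 else 0)) + ((if (x (1) 0) then 1 else 0) + (if (x (1) 1) then 1 else 0) + (if (x (1) 2) then 1 else 0) + (if (x (1) 3) then 1 else 0))) + ((if (x (-2) 0) then 1 else 0) + (if (x (-2) 1) then 1 else 0) + (if (x (-2) 2) then 1 else 0) + (if (x (-2) 3) then 1 else 0)) + ((if (x (2) 0) then 1 else 0) + (if (x (2) 1) then 1 else 0) + (if (x (2) 2) then 1 else 0) + (if (x (2) 3) then 1 else 0))"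
    apply (rule A_bool[where xm30v = "x (-3) 0" and xm31v = "x (-3) 1" and xm32v = "x (-3) 2" and xm33v = "x (-3) 3" and xm20v = "x (-2) 0" and xm21v = "x (-2) 1" and xm22v = "x (-2) 2" and xm23v = "x (-2) 3" and xm10v = "x (-1) 0" and xm11v = "x (-1) 1" and xm12v = "x (-1) 2" and xm13v = "x (-1) 3" and xp00v = "x (0) 0" and xp01v = "x (0) 1" and xp02v = "x (0) 2" and xp03v = "x (0) 3" and xp10v = "x (1) 0" and xp11v = "x (1) 1" and xp12v = "x (1) 2" and xp13v = "x (1) 3" and xp20v = "x (2) 0" and xp21v = "x (2) 1" and xp22v = "x (2) 2" and xp23v = "x (2) 3" and xp30v = "x (3) 0" and xp31v = "x (3) 1" and xp32v = "x (3) 2" and xp33v = "x (3) 3"])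
    using assms by (simp_all add: ldc_def ld_def ind_def)
  then show ?thesis by (simp add: WW_def cnt_def ind_def)
qed

lemma localB:
  assumes "ldc x (-2)" "ldc x (-1)" "ldc x 0" "ldc x 1" "ldc x 2"
    "WW x (-1) = 8" "WW x 0 = 8" "WW x 1 = 8"
  shows "x 2 0 = x 0 2 \<and> x 2 1 = x 0 3 \<and> x 2 2 = x 0 0 \<and> x 2 3 = x 0 1"
proof -
  have "((x (2) 0) = (x (0) 2)) \<and> ((x (2) 1) = (x (0) 3)) \<and> ((x (2) 2) = (x (0) 0)) \<and> ((x (2) 3) = (x (0) 1))"
    apply (rule B_bool[where xm40v = "x (-4) 0" and xm41v = "x (-4) 1" and xm42v = "x (-4) 2" and xm43v = "x (-4) 3" and xm30v = "x (-3) 0" and xm31v = "x (-3) 1" and xm32v = "x (-3) 2" and xm33v = "x (-3) 3" and xm20v = "x (-2) 0" and xm21v = "x (-2) 1" and xm22v = "x (-2) 2" and xm23v = "x (-2) 3" and xm10v = "x (-1) 0" and xm11v = "x (-1) 1" and xm12v = "x (-1) 2" and xm13v = "x (-1) 3" and xp00v = "x (0) 0" and xp01v = "x (0) 1" and xp02v = "x (0) 2" and xp03v = "x (0) 3" and xp10v = "x (1) 0" and xp11v = "x (1) 1" and xp12v = "x (1) 2" and xp13v = "x (1) 3" and xp20v = "x (2) 0" and xp21v = "x (2) 1" and xp22v = "x (2) 2" and xp23v = "x (2) 3" and xp30v = "x (3) 0" and xp31v = "x (3) 1" and xp32v = "x (3) 2" and xp33v = "x (3) 3" and xp40v = "x (4)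 0" and xp41v = "x (4) 1" and xp42v = "x (4) 2" and xp43v = "x (4) 3"])
    using assms by (simp_all add: ldc_def ld_def ind_def WW_def cnt_def)
  then show ?thesis by simp
qed

lemma localC:
  assumes "\<forall>k. x k 2 = x k 0 \<and> x k 3 = x k 1"
   "ldc x (-1)" "ldc x 0" "ldc x 1" "ldc x 2"
    "WW x 0 = 8" "WW x 1 = 8"
  shows False
  apply (rule C_bool[where xm30v = "x (-3) 0" and xm31v = "x (-3) 1" and xm32v = "x (-3) 2" and xm33v = "x (-3) 3" and xm20v = "x (-2) 0" and xm21v = "x (-2) 1" and xm22v = "x (-2) 2" and xm23v = "x (-2) 3" and xm10v = "x (-1) 0" and xm11v = "x (-1) 1" and xm12v = "x (-1) 2" and xm13v = "x (-1) 3" and xp00v = "x (0) 0" and xp01v = "x (0) 1" and xp02v = "x (0) 2" and xp03v = "x (0) 3" and xp10v = "x (1) 0" and xp11v = "x (1) 1" and xp12v = "x (1) 2" and xp13v = "x (1) 3" and xp20v = "x (2) 0" and xp21v = "x (2) 1" and xp22v = "x (2) 2" and xp23v = "x (2) 3" and xp30v = "x (3) 0" and xp31v = "x (3) 1" and xp32v = "x (3) 2" and xp33v = "x (3) 3" and xp40v = "x (4) 0" and xp41v = "x (4) 1" and xp42v = "x (4) 2" and xp43v = "x (4) 3"])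
  using assms by (simp_all add: ldc_def ld_def ind_def WW_def cnt_def)




definition sh :: "nat \<Rightarrow> int \<Rightarrow> nat \<Rightarrow> nat" where
  "sh n k j = nat ((int j + k) mod int n)"

lemma sh_lt: "0 < n \<Longrightarrow> sh n k j < n"
  unfolding sh_def by (simp add: nat_less_iff)

lemma sh_0: "j < n \<Longrightarrow> sh n 0 j = j"
  unfolding sh_def by simp

lemma int_sh: "0 < n \<Longrightarrow> int (sh n k j) = (int j + k) mod int n"
  unfolding sh_def by simp

lemma sh_sh: "0 < n \<Longrightarrow> sh n k' (sh n k j) = sh n (k + k') j"
  unfolding sh_def by (simp add: mod_add_left_eq add.assoc)

lemma sh_eq_iff: "0 < n \<Longrightarrow> sh n a j = sh n b j \<longleftrightarrow> int n dvd (a - b)"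
proof -
  assume n: "0 < n"
  have "sh n a j = sh n b j \<longleftrightarrow> (int j + a) mod int n = (int j + b) mod int n"
    using int_sh[OF n] by (metis of_nat_eq_iff)
  also have "\<dots> \<longleftrightarrow> int n dvd ((int j + a) - (int j + b))"
    by (simp add: mod_eq_dvd_iff)
  finally show ?thesis by simp
qed

lemma sh_1: "j < n \<Longrightarrow> sh n 1 j = (j + 1) mod n"
  unfolding sh_def by (simp add: nat_mod_distrib nat_add_distrib)

lemma sh_m1: "j < n \<Longrightarrow> b < n \<Longrightarrow> j = (b + 1) mod n \<longleftrightarrow> b = sh n (-1) j"
proof -
  assume j: "j < n" and b: "b < n"
  then have n: "0 < n" by simp
  have "j = (b + 1) mod n \<longleftrightarrow> int j = (int b + 1) mod int n"
    by (metis of_nat_1 of_nat_add of_nat_eq_iff zmod_int)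
  also have "\<dots> \<longleftrightarrow> int b = (int j - 1) mod int n"
  proof
    assume "int j = (int b + 1) mod int n"
    then have "(int j - 1) mod int n = ((int b + 1) mod int n - 1) mod int n" by simp
    also have "\<dots> = int b mod int n" by (simp add: mod_diff_left_eq)
    also have "\<dots> = int b" using b by simp
    finally show "int b = (int j - 1) mod int n" by simp
  next
    assume "int b = (int j - 1) mod int n"
    then have "(int b + 1) mod int n = ((int j - 1) mod int n + 1) mod int n" by simp
    also have "\<dots> = int j mod int n" by (simp add: mod_add_left_eq)
    also have "\<dots> = int j" using j by simp
    finally show "int j = (int b + 1) mod int n" by simp
  qed
  also have "\<dots> \<longleftrightarrow> b = sh n (-1) j"
    using int_sh[OF n, of "-1" j] by (metis of_nat_eq_iff diff_conv_add_uminus)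
  finally show ?thesis .
qed

lemma cyc_iff: "a < n \<Longrightarrow> b < n \<Longrightarrow> cycle_E n a b \<longleftrightarrow> (b = sh n 1 a \<or> b = sh n (-1) a)"
  unfolding cycle_E_def using sh_1[of a n] sh_m1[of a n b] by auto

lemma sum_sh:
  assumes n: "0 < n"
  shows "(\<Sum>j<n. f (sh n k j)) = (\<Sum>j<n. f j)"
  by (rule sum.reindex_bij_witness[where i = "sh n (-k)" and j = "sh n k"])
     (auto simp: sh_sh[OF n] sh_0 sh_lt[OF n])


abbreviation VV :: "nat \<Rightarrow> (nat \<times> nat) set" where
  "VV n \<equiv> cart_V (cycle_V 4) (cycle_V n)"
abbreviation EE :: "nat \<Rightarrow> nat \<times> nat \<Rightarrow> nat \<times> nat \<Rightarrow> bool" where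
  "EE n \<equiv> cart_E (cycle_E 4) (cycle_E n)"

lemma V_eq: "VV n = {..<4} \<times> {..<n}"
  unfolding cart_V_def cycle_V_def by auto

lemma lt4: "(a::nat) < 4 \<longleftrightarrow> a = 0 \<or> a = 1 \<or> a = 2 \<or> a = 3"
  by auto

lemma row_iff: assumes "(a::nat) < 4" "c < 4" shows "cycle_E 4 a c \<longleftrightarrow> (c = (a+1) mod 4 \<or> c = (a+3) mod 4)"
proof -
  have "a = 0 \<or> a = 1 \<or> a = 2 \<or> a = 3" "c = 0 \<or> c = 1 \<or> c = 2 \<or> c = 3" using assms by auto
  then show ?thesis unfolding cycle_E_def by (elim disjE) simp_all
qed

lemma E_iff:
  assumes "a < 4" "c < 4" "b < n" "d < n"
  shows "EE n (a,b) (c,d) \<longleftrightarrow> (a = c \<and> (d = sh n 1 b \<or> d = sh n (-1) b)) \<or>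
      (b = d \<and> (c = (a+1) mod 4 \<or> c = (a+3) mod 4))"
  using assms row_iff[of a c] cyc_iff[of b n d] unfolding cart_E_def by simp

lemma rows:
  "(a::nat) < 4 \<Longrightarrow> ((a+1) mod 4 + 1) mod 4 = (a+2) mod 4"
  "(a::nat) < 4 \<Longrightarrow> ((a+1) mod 4 + 3) mod 4 = a"
  "(a::nat) < 4 \<Longrightarrow> ((a+3) mod 4 + 1) mod 4 = a"
  "(a::nat) < 4 \<Longrightarrow> ((a+3) mod 4 + 3) mod 4 = (a+2) mod 4"
  by (auto simp: lt4)

lemma nbhd_sub:
  assumes "i < 4" "j < n"
  shows "nbhd (VV n) (EE n) (i,j) \<subseteq> {((i+1) mod 4, j), ((i+3) mod 4, j), (i, sh n 1 j), (i, sh n (-1) j)}"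
proof
  fix w assume w: "w \<in> nbhd (VV n) (EE n) (i,j)"
  obtain c d where wcd: "w = (c,d)" by (cases w)
  with w have c: "c < 4" "d < n" and e: "EE n (i,j) (c,d)"
    unfolding nbhd_def V_eq by auto
  from e show "w \<in> {((i+1) mod 4, j), ((i+3) mod 4, j), (i, sh n 1 j), (i, sh n (-1) j)}"
    using E_iff[OF assms(1) c(1) assms(2) c(2)] wcd by auto
qed

definition P7 :: "nat \<Rightarrow> nat \<Rightarrow> nat \<Rightarrow> (nat \<times> nat) list" where
  "P7 n i j = [((i+2) mod 4, j), ((i+1) mod 4, sh n (-1) j), ((i+3) mod 4, sh n (-1) j),
     ((i+1) mod 4, sh n 1 j), ((i+3) mod 4, sh n 1 j), (i, sh n (-2) j), (i, sh n 2 j)]"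

lemma nbhd2_sub:
  assumes "i < 4" "j < n"
  shows "nbhd2 (VV n) (EE n) (i,j) \<subseteq> set (P7 n i j)"
proof
  have n: "0 < n" using assms by simp
  fix w assume w: "w \<in> nbhd2 (VV n) (EE n) (i,j)"
  obtain c d where wcd: "w = (c,d)" by (cases w)
  with w obtain u where u: "u \<in> VV n" "EE n (i,j) u" "EE n u (c,d)" and c: "c < 4" "d < n"
    and ne: "(c,d) \<noteq> (i,j)"
    unfolding nbhd2_def V_eq by auto
  obtain a b where uab: "u = (a,b)" by (cases u)
  with u have ab: "a < 4" "b < n" unfolding V_eq by auto
  have e1: "(i = a \<and> (b = sh n 1 j \<or> b = sh n (-1) j)) \<or> (j = b \<and> (a = (i+1) mod 4 \<or> a = (i+3) mod 4))"
    using E_iff[OF assms(1) ab(1) assms(2) ab(2)] u(2) uab by simp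
  have e2: "(a = c \<and> (d = sh n 1 b \<or> d = sh n (-1) b)) \<or> (b = d \<and> (c = (a+1) mod 4 \<or> c = (a+3) mod 4))"
    using E_iff[OF ab(1) c(1) ab(2) c(2)] u(3) uab by simp
  have s: "sh n 1 (sh n 1 j) = sh n 2 j" "sh n (-1) (sh n 1 j) = j"
      "sh n 1 (sh n (-1) j) = j" "sh n (-1) (sh n (-1) j) = sh n (-2) j"
    using sh_sh[OF n] sh_0[OF assms(2)] by simp_all
  show "w \<in> set (P7 n i j)"
    using e1 e2 ne wcd s rows[OF assms(1)] unfolding P7_def by auto
qed

lemma card_le_sum_list:
  "int (card (set xs \<inter> S)) \<le> sum_list (map (\<lambda>p. ind (p \<in> S)) xs)"
proof (induction xs)
  case Nil then show ?case by simp
next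
  case (Cons a xs)
  have "card (set (a # xs) \<inter> S) \<le> card (set xs \<inter> S) + (if a \<in> S then 1 else 0)"
  proof (cases "a \<in> S")
    case True
    have "set (a # xs) \<inter> S = insert a (set xs \<inter> S)" using True by auto
    then show ?thesis using True by (simp add: card_insert_if)
  next
    case False
    then have "set (a # xs) \<inter> S = set xs \<inter> S" by auto
    then show ?thesis by simp
  qed
  then show ?case using Cons by (simp add: ind_def split: if_splits)
qed

definition xx :: "(nat \<times> nat) set \<Rightarrow> nat \<Rightarrow> nat \<Rightarrow> int \<Rightarrow> int \<Rightarrow> bool" where
  "xx S n j = (\<lambda>k r. (nat (r mod 4), sh n k j) \<in> S)"

lemma natrow:
  "nat ((int i + 1) mod 4) = (i + 1) mod 4"
  "nat ((int i + 2) mod 4) = (i + 2) mod 4"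
  "nat ((int i + 3) mod 4) = (i + 3) mod 4"
  "i < 4 \<Longrightarrow> nat (int i mod 4) = i"
  by (simp_all add: nat_mod_distrib nat_add_distrib)

lemma dom_local:
  assumes n: "4 \<le> n" and D: "disj_dom_set (VV n) (EE n) S" and i: "i < 4" and j: "j < n"
  shows "ld (xx S n j) 0 (int i)"
proof -
  have sj: "sh n 0 j = j" using sh_0[OF j] .
  have expand: "ld (xx S n j) 0 (int i) \<longleftrightarrow>
     (i,j) \<in> S \<or> ((i+1) mod 4, j) \<in> S \<or> ((i+3) mod 4, j) \<in> S \<or> (i, sh n (-1) j) \<in> S \<or> (i, sh n 1 j) \<in> S \<or>
     2 \<le> ind (((i+2) mod 4, j) \<in> S) + ind (((i+1) mod 4, sh n (-1) j) \<in> S) + ind (((i+3) mod 4, sh n (-1) j) \<in> S)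
       + ind (((i+1) mod 4, sh n 1 j) \<in> S) + ind (((i+3) mod 4, sh n 1 j) \<in> S) + ind ((i, sh n (-2) j) \<in> S)
       + ind ((i, sh n 2 j) \<in> S)"
    unfolding ld_def xx_def using i by (simp add: natrow sj)
  show ?thesis
  proof (cases "(i,j) \<in> S")
    case True then show ?thesis using expand by simp
  next
    case False
    have vV: "(i,j) \<in> VV n - S" using False i j V_eq by auto
    from D vV have "card (nbhd (VV n) (EE n) (i,j) \<inter> S) \<ge> 1 \<or> card (nbhd2 (VV n) (EE n) (i,j) \<inter> S) \<ge> 2"
      unfolding disj_dom_set_def by blast
    then show ?thesis
    proof
      assume "card (nbhd (VV n) (EE n) (i,j) \<inter> S) \<ge> 1"
      then have "nbhd (VV n) (EE n) (i,j) \<inter> S \<noteq> {}" by auto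
      then obtain w where "w \<in> nbhd (VV n) (EE n) (i,j)" "w \<in> S" by auto
      then show ?thesis using nbhd_sub[OF i j] expand by auto
    next
      assume c2: "card (nbhd2 (VV n) (EE n) (i,j) \<inter> S) \<ge> 2"
      have "card (nbhd2 (VV n) (EE n) (i,j) \<inter> S) \<le> card (set (P7 n i j) \<inter> S)"
        using nbhd2_sub[OF i j] by (intro card_mono) auto
      then have "2 \<le> sum_list (map (\<lambda>p. ind (p \<in> S)) (P7 n i j))"
        using c2 card_le_sum_list[of "P7 n i j" S] by linarith
      then show ?thesis using expand unfolding P7_def by simp
    qed
  qed
qed


lemma shift_gen:
  assumes "\<forall>k' r. y k' r = x (k + k') r"
  shows "ld x k i = ld y 0 i" "cnt x k = cnt y 0" "WW x k = WW y 0"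
proof -
  have y: "y k' r = x (k + k') r" for k' r using assms by simp
  show "ld x k i = ld y 0 i" unfolding ld_def y by simp
  show "cnt x k = cnt y 0" unfolding cnt_def y by simp
  show "WW x k = WW y 0" unfolding WW_def cnt_def y by simp
qed

lemma xx_shift: "0 < n \<Longrightarrow> \<forall>k' r. xx S n (sh n k j) k' r = xx S n j (k + k') r"
  unfolding xx_def by (simp add: sh_sh)

lemmas xx_sh = shift_gen[OF xx_shift]

lemma ldc_all:
  assumes n: "4 \<le> n" and D: "disj_dom_set (VV n) (EE n) S" and j: "j < n"
  shows "ldc (xx S n j) k"
proof -
  have n0: "0 < n" using n by simp
  have jj: "sh n k j < n" using sh_lt[OF n0] .
  have h: "ld (xx S n (sh n k j)) 0 (int i)" if "i < 4" for i
    using dom_local[OF n D that jj] .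
  have "ld (xx S n (sh n k j)) 0 0" "ld (xx S n (sh n k j)) 0 1" "ld (xx S n (sh n k j)) 0 2"
     "ld (xx S n (sh n k j)) 0 3"
    using h[of 0] h[of 1] h[of 2] h[of 3] by simp_all
  moreover have e: "ld (xx S n j) k r = ld (xx S n (sh n k j)) 0 r" for r
    by (rule xx_sh(1)[OF n0])
  ultimately show ?thesis unfolding ldc_def e by simp
qed


lemma cnt0: "j < n \<Longrightarrow> cnt (xx S n j) 0 = ind ((0,j)\<in>S) + ind ((1,j)\<in>S) + ind ((2,j)\<in>S) + ind ((3,j)\<in>S)"
  unfolding cnt_def xx_def by (simp add: sh_0)

lemma card_sum:
  assumes SV: "S \<subseteq> VV n"
  shows "int (card S) = (\<Sum>j<n. cnt (xx S n j) 0)"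
proof -
  have fin: "finite (VV n)" by (simp add: V_eq)
  have "(\<Sum>p\<in>VV n. ind (p \<in> S)) = (\<Sum>p\<in>VV n \<inter> S. (1::int))"
    by (simp only: ind_def sum.inter_restrict[OF fin])
  also have "VV n \<inter> S = S" using SV by auto
  finally have "int (card S) = (\<Sum>p\<in>VV n. ind (p \<in> S))" by simp
  also have "\<dots> = (\<Sum>i<4. \<Sum>j<n. ind ((i,j)\<in>S))"
    unfolding V_eq by (simp add: sum.cartesian_product)
  also have "\<dots> = (\<Sum>j<n. \<Sum>i<4. ind ((i,j)\<in>S))" by (rule sum.swap)
  also have "\<dots> = (\<Sum>j<n. cnt (xx S n j) 0)"
    by (rule sum.cong) (simp_all add: cnt0 numeral_eq_Suc)
  finally show ?thesis .
qed

lemma lower: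
  assumes n: "4 \<le> n" and D: "disj_dom_set (VV n) (EE n) S"
  shows "n \<le> 2 * card S \<and> (n mod 4 = 2 \<longrightarrow> n \<noteq> 2 * card S)"
proof -
  have n0: "0 < n" using n by simp
  have SV: "S \<subseteq> VV n" using D unfolding disj_dom_set_def by simp
  define c where "c = (\<lambda>j. cnt (xx S n j) 0)"
  have cs: "cnt (xx S n j) k = c (sh n k j)" for j k
    unfolding c_def by (rule xx_sh(2)[OF n0])
  have c0: "c (sh n 0 j) = c j" if "j < n" for j using sh_0[OF that] by simp
  have Wj: "WW (xx S n j) 0 = 6 * c j + 4 * (c (sh n (-1) j) + c (sh n 1 j)) + c (sh n (-2) j) + c (sh n 2 j)"
    if "j < n" for j
    unfolding WW_def using cs c0[OF that] by simp
  have "(\<Sum>j<n. WW (xx S n j) 0) = 6 * (\<Sum>j<n. c j) + 4 * ((\<Sum>j<n. c (sh n (-1) j)) + (\<Sum>j<n. c (sh n 1 j)))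
      + (\<Sum>j<n. c (sh n (-2) j)) + (\<Sum>j<n. c (sh n 2 j))"
    by (simp add: Wj sum.distrib sum_distrib_left)
  also have "\<dots> = 16 * (\<Sum>j<n. c j)" by (simp add: sum_sh[OF n0])
  also have "\<dots> = 16 * int (card S)" using card_sum[OF SV] unfolding c_def by simp
  finally have sumW: "(\<Sum>j<n. WW (xx S n j) 0) = 16 * int (card S)" .
  have ldcs: "ldc (xx S n j) k" if "j < n" for j k using ldc_all[OF n D that] .
  have W8: "8 \<le> WW (xx S n j) 0" if "j < n" for j
    using localA ldcs[OF that] by blast
  have "(\<Sum>j<n. (8::int)) \<le> (\<Sum>j<n. WW (xx S n j) 0)"
    by (rule sum_mono) (simp add: W8)
  then have A: "8 * int n \<le> 16 * int (card S)" using sumW by simp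
  have B: "n \<noteq> 2 * card S" if n4: "n mod 4 = 2"
  proof
    assume eq: "n = 2 * card S"
    have "(\<Sum>j<n. WW (xx S n j) 0 - 8) = 0" using sumW eq by (simp add: sum_subtractf)
    then have tight0: "\<forall>j\<in>{..<n}. WW (xx S n j) 0 - 8 = 0"
      using sum_nonneg_eq_0_iff[of "{..<n}" "\<lambda>j. WW (xx S n j) 0 - 8"] W8 by simp
    have tight: "WW (xx S n j) k = 8" if "j < n" for j k
    proof -
      have "WW (xx S n j) k = WW (xx S n (sh n k j)) 0" by (rule xx_sh(3)[OF n0])
      then show ?thesis using tight0 sh_lt[OF n0, of k j] by simp
    qed
    have rot: "(r, sh n 2 j) \<in> S \<longleftrightarrow> ((r+2) mod 4, j) \<in> S" if "j < n" "r < 4" for j r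
    proof -
      have "xx S n j 2 0 = xx S n j 0 2 \<and> xx S n j 2 1 = xx S n j 0 3 \<and> xx S n j 2 2 = xx S n j 0 0 \<and> xx S n j 2 3 = xx S n j 0 1"
        by (rule localB) (simp_all add: ldcs tight that(1))
      then have "((0, sh n 2 j) \<in> S \<longleftrightarrow> (2, j) \<in> S) \<and> ((1, sh n 2 j) \<in> S \<longleftrightarrow> (3, j) \<in> S) \<and>
          ((2, sh n 2 j) \<in> S \<longleftrightarrow> (0, j) \<in> S) \<and> ((3, sh n 2 j) \<in> S \<longleftrightarrow> (1, j) \<in> S)"
        unfolding xx_def using sh_0[OF that(1)] by simp
      moreover have "r = 0 \<or> r = 1 \<or> r = 2 \<or> r = 3" using that(2) by auto
      ultimately show ?thesis by (elim disjE) (simp_all del: add_2_eq_Suc add_2_eq_Suc')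
    qed
    have it: "\<forall>j<n. \<forall>r<4. ((r, sh n (2 * int m) j) \<in> S \<longleftrightarrow> ((r + 2*m) mod 4, j) \<in> S)" for m
    proof (induction m)
      case 0 then show ?case by (simp add: sh_0)
    next
      case (Suc m)
      show ?case
      proof (intro allI impI)
        fix j r :: nat assume j: "j < n" and r: "r < 4"
        define j' where "j' = sh n (2 * int m) j"
        have j': "j' < n" unfolding j'_def using sh_lt[OF n0] .
        have "sh n (2 * int (Suc m)) j = sh n 2 j'" unfolding j'_def using sh_sh[OF n0] by (simp add: algebra_simps)
        then have "(r, sh n (2 * int (Suc m)) j) \<in> S \<longleftrightarrow> ((r+2) mod 4, j') \<in> S" using rot[OF j' r] by simp
        also have "\<dots> \<longleftrightarrow> (((r+2) mod 4 + 2*m) mod 4, j) \<in> S" using Suc.IH j unfolding j'_def by simp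
        also have "((r+2) mod 4 + 2*m) mod 4 = (r + 2 * Suc m) mod 4" by (simp add: mod_add_left_eq)
        finally show "(r, sh n (2 * int (Suc m)) j) \<in> S \<longleftrightarrow> ((r + 2 * Suc m) mod 4, j) \<in> S" .
      qed
    qed
    have inv: "(r, j) \<in> S \<longleftrightarrow> ((r+2) mod 4, j) \<in> S" if "j < n" "r < 4" for j r
    proof -
      obtain q where q: "n = 4 * q + 2" using n4 by (metis div_mult_mod_eq mult.commute)
      have e2: "n div 2 = 2 * q + 1" using q by simp
      have e3: "2 * int (n div 2) = int n" using q e2 by simp
      have "sh n (2 * int (n div 2)) j = j" unfolding sh_def e3 using that(1) by simp
      moreover have "(r + 2 * (n div 2)) mod 4 = (r+2) mod 4"
      proof -
        have "r + 2 * (n div 2) = (r + 2) + 4 * q" unfolding e2 by simp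
        then show ?thesis by (simp only: mod_mult_self2)
      qed
      moreover have "(r, sh n (2 * int (n div 2)) j) \<in> S \<longleftrightarrow> ((r + 2 * (n div 2)) mod 4, j) \<in> S"
        using it[of "n div 2"] that by blast
      ultimately show ?thesis by (simp only:)
    qed
    have "\<forall>k. xx S n 0 k 2 = xx S n 0 k 0 \<and> xx S n 0 k 3 = xx S n 0 k 1"
    proof
      fix k
      have "sh n k 0 < n" using sh_lt[OF n0] .
      then show "xx S n 0 k 2 = xx S n 0 k 0 \<and> xx S n 0 k 3 = xx S n 0 k 1"
        unfolding xx_def using inv[of "sh n k 0" 0] inv[of "sh n k 0" 1] by (simp del: add_2_eq_Suc add_2_eq_Suc')
    qed
    then show False
      by (rule localC) (simp_all add: ldcs tight n0)
  qed
  show ?thesis using A B by simp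
qed


lemma sh_ne:
  assumes n: "4 \<le> n" and ab: "a \<noteq> b" "\<bar>a - b\<bar> < 4"
  shows "sh n a j \<noteq> sh n b j"
proof
  have n0: "0 < n" using n by simp
  assume "sh n a j = sh n b j"
  then have "int n dvd (a - b)" using sh_eq_iff[OF n0] by simp
  then have "\<bar>int n\<bar> \<le> \<bar>a - b\<bar>" using ab(1) by (intro dvd_imp_le_int) auto
  then show False using n ab(2) by simp
qed

lemma nb2I:
  assumes "(c,d) \<in> VV n" "(c,d) \<noteq> (i,j)" "\<not> EE n (i,j) (c,d)" "(a,b) \<in> VV n" "EE n (i,j) (a,b)" "EE n (a,b) (c,d)"
  shows "(c,d) \<in> nbhd2 (VV n) (EE n) (i,j)"
  using assms unfolding nbhd2_def by blast

lemma rowfacts: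
  assumes "(i::nat) < 4"
  shows "(i+2) mod 4 \<noteq> i" "(i+2) mod 4 \<noteq> (i+1) mod 4" "(i+2) mod 4 \<noteq> (i+3) mod 4"
    "(i+1) mod 4 \<noteq> i" "(i+3) mod 4 \<noteq> i" "(i+1) mod 4 \<noteq> (i+3) mod 4"
  using assms by (auto simp: lt4 simp del: add_2_eq_Suc add_2_eq_Suc')

lemma in_P7:
  assumes n: "4 \<le> n" and i: "i < 4" and j: "j < n" and p: "p \<in> set (P7 n i j)"
  shows "p \<in> nbhd2 (VV n) (EE n) (i,j)"
proof -
  have n0: "0 < n" using n by simp
  have j0: "sh n 0 j = j" using sh_0[OF j] .
  have ne: "sh n 1 j \<noteq> j" "sh n (-1) j \<noteq> j" "sh n 2 j \<noteq> j" "sh n (-2) j \<noteq> j"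
     "sh n 2 j \<noteq> sh n 1 j" "sh n 2 j \<noteq> sh n (-1) j" "sh n (-2) j \<noteq> sh n 1 j"
     "sh n (-2) j \<noteq> sh n (-1) j" "sh n 1 j \<noteq> sh n (-1) j"
    using sh_ne[OF n, of 1 0 j] sh_ne[OF n, of "-1" 0 j] sh_ne[OF n, of 2 0 j] sh_ne[OF n, of "-2" 0 j]
      sh_ne[OF n, of 2 1 j] sh_ne[OF n, of 2 "-1" j] sh_ne[OF n, of "-2" 1 j] sh_ne[OF n, of "-2" "-1" j]
      sh_ne[OF n, of 1 "-1" j] j0 by simp_all
  have ne': "j \<noteq> sh n 1 j" "j \<noteq> sh n (-1) j" "j \<noteq> sh n 2 j" "j \<noteq> sh n (-2) j"
     "sh n 1 j \<noteq> sh n 2 j" "sh n (-1) j \<noteq> sh n 2 j" "sh n 1 j \<noteq> sh n (-2) j"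
     "sh n (-1) j \<noteq> sh n (-2) j" "sh n (-1) j \<noteq> sh n 1 j"
    using ne by metis+
  have comp: "sh n 1 (sh n 1 j) = sh n 2 j" "sh n (-1) (sh n (-1) j) = sh n (-2) j"
     "sh n (-1) (sh n 1 j) = j" "sh n 1 (sh n (-1) j) = j"
    by (simp_all add: sh_sh[OF n0] j0)
  have lt: "sh n k j < n" for k using sh_lt[OF n0] .
  have rf: "(i+2) mod 4 \<noteq> i" "(i+2) mod 4 \<noteq> (i+1) mod 4" "(i+2) mod 4 \<noteq> (i+3) mod 4"
    "(i+1) mod 4 \<noteq> i" "(i+3) mod 4 \<noteq> i" "(i+1) mod 4 \<noteq> (i+3) mod 4"
    "i \<noteq> (i+2) mod 4" "(i+1) mod 4 \<noteq> (i+2) mod 4" "(i+3) mod 4 \<noteq> (i+2) mod 4"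
    "i \<noteq> (i+1) mod 4" "i \<noteq> (i+3) mod 4" "(i+3) mod 4 \<noteq> (i+1) mod 4"
    using i by (auto simp: lt4 simp del: add_2_eq_Suc add_2_eq_Suc')
  note rw = V_eq E_iff lt ne ne' comp i j
  have i4: "i = 0 \<or> i = 1 \<or> i = 2 \<or> i = 3" using i by auto
  from p consider "p = ((i+2) mod 4, j)" | "p = ((i+1) mod 4, sh n (-1) j)" | "p = ((i+3) mod 4, sh n (-1) j)"
    | "p = ((i+1) mod 4, sh n 1 j)" | "p = ((i+3) mod 4, sh n 1 j)" | "p = (i, sh n (-2) j)" | "p = (i, sh n 2 j)"
    unfolding P7_def by auto
  then show ?thesis
  proof cases
    case 1 show ?thesis unfolding 1 using i4
      apply (elim disjE)
      apply (rule nb2I[where a="(i+1) mod 4" and b=j], (auto simp: rw)[6])+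
      done
  next
    case 2 show ?thesis unfolding 2 using i4
      apply (elim disjE)
      apply (rule nb2I[where a=i and b="sh n (-1) j"], (auto simp: rw)[6])+
      done
  next
    case 3 show ?thesis unfolding 3 using i4
      apply (elim disjE)
      apply (rule nb2I[where a=i and b="sh n (-1) j"], (auto simp: rw)[6])+
      done
  next
    case 4 show ?thesis unfolding 4 using i4
      apply (elim disjE)
      apply (rule nb2I[where a=i and b="sh n 1 j"], (auto simp: rw)[6])+
      done
  next
    case 5 show ?thesis unfolding 5 using i4
      apply (elim disjE)
      apply (rule nb2I[where a=i and b="sh n 1 j"], (auto simp: rw)[6])+
      done
  next
    case 6 show ?thesis unfolding 6 using i4
      apply (elim disjE)
      apply (rule nb2I[where a=i and b="sh n (-1) j"], (auto simp: rw)[6])+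
      done
  next
    case 7 show ?thesis unfolding 7 using i4
      apply (elim disjE)
      apply (rule nb2I[where a=i and b="sh n 1 j"], (auto simp: rw)[6])+
      done
  qed
qed

lemma in_adj:
  assumes n: "4 \<le> n" and i: "i < 4" and j: "j < n"
    and p: "p \<in> {((i+1) mod 4, j), ((i+3) mod 4, j), (i, sh n 1 j), (i, sh n (-1) j)}"
  shows "p \<in> nbhd (VV n) (EE n) (i,j)"
proof -
  have n0: "0 < n" using n by simp
  have lt: "sh n k j < n" for k using sh_lt[OF n0] .
  show ?thesis using p unfolding nbhd_def by (auto simp: V_eq E_iff lt i j)
qed

lemma dds_suff:
  assumes n: "4 \<le> n" and SV: "S \<subseteq> VV n"
    and Q: "\<And>i j. i < 4 \<Longrightarrow> j < n \<Longrightarrow> (i,j) \<notin> S \<Longrightarrow>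
      (\<exists>p\<in>{((i+1) mod 4, j), ((i+3) mod 4, j), (i, sh n 1 j), (i, sh n (-1) j)}. p \<in> S) \<or>
      (\<exists>p\<in>set (P7 n i j). \<exists>q\<in>set (P7 n i j). p \<noteq> q \<and> p \<in> S \<and> q \<in> S)"
  shows "disj_dom_set (VV n) (EE n) S"
  unfolding disj_dom_set_def
proof (intro conjI SV ballI)
  fix v assume v: "v \<in> VV n - S"
  obtain i j where vij: "v = (i,j)" by (cases v)
  with v have i: "i < 4" and j: "j < n" and vS: "(i,j) \<notin> S" unfolding V_eq by auto
  have fin1: "finite (nbhd (VV n) (EE n) (i,j) \<inter> S)"
    by (rule finite_subset[of _ "VV n"]) (auto simp: nbhd_def V_eq)
  have fin2: "finite (nbhd2 (VV n) (EE n) (i,j) \<inter> S)"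
    by (rule finite_subset[of _ "VV n"]) (auto simp: nbhd2_def V_eq)
  from Q[OF i j vS] show "1 \<le> card (nbhd (VV n) (EE n) v \<inter> S) \<or> 2 \<le> card (nbhd2 (VV n) (EE n) v \<inter> S)"
  proof
    assume "\<exists>p\<in>{((i+1) mod 4, j), ((i+3) mod 4, j), (i, sh n 1 j), (i, sh n (-1) j)}. p \<in> S"
    then obtain p where p: "p \<in> {((i+1) mod 4, j), ((i+3) mod 4, j), (i, sh n 1 j), (i, sh n (-1) j)}" "p \<in> S"
      by blast
    have "p \<in> nbhd (VV n) (EE n) (i,j) \<inter> S" using in_adj[OF n i j p(1)] p(2) by simp
    then have "card (nbhd (VV n) (EE n) (i,j) \<inter> S) \<noteq> 0" using fin1 by auto
    then show ?thesis using vij by simp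
  next
    assume "\<exists>p\<in>set (P7 n i j). \<exists>q\<in>set (P7 n i j). p \<noteq> q \<and> p \<in> S \<and> q \<in> S"
    then obtain p q where pq: "p \<in> set (P7 n i j)" "q \<in> set (P7 n i j)" "p \<noteq> q" "p \<in> S" "q \<in> S" by blast
    have "{p, q} \<subseteq> nbhd2 (VV n) (EE n) (i,j) \<inter> S" using in_P7[OF n i j pq(1)] in_P7[OF n i j pq(2)] pq by simp
    then have "card {p,q} \<le> card (nbhd2 (VV n) (EE n) (i,j) \<inter> S)" using fin2 by (rule card_mono[rotated])
    then show ?thesis using vij pq(3) by simp
  qed
qed


definition UU :: "nat \<Rightarrow> (nat \<times> nat) set" where
  "UU n = {(i,j). i < 4 \<and> j < n \<and> ((i = 0 \<and> j mod 4 = 0) \<or> (i = 2 \<and> j mod 4 = 2) \<or> (n mod 4 = 2 \<and> i = 2 \<and> j = 0))}"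

lemma sh_p1: "j + 1 < n \<Longrightarrow> sh n 1 j = j + 1"
  unfolding sh_def by (simp add: nat_add_distrib)
lemma sh_p1w: "j + 1 = n \<Longrightarrow> sh n 1 j = 0"
proof -
  assume "j + 1 = n"
  then have "int j + 1 = int n" by simp
  then show ?thesis unfolding sh_def by simp
qed
lemma sh_p2: "j + 2 < n \<Longrightarrow> sh n 2 j = j + 2"
  unfolding sh_def by (simp add: nat_add_distrib)
lemma sh_m1': "1 \<le> j \<Longrightarrow> j < n \<Longrightarrow> sh n (-1) j = j - 1"
  unfolding sh_def by (simp add: of_nat_diff[symmetric] nat_diff_distrib)
lemma sh_m2': "2 \<le> j \<Longrightarrow> j < n \<Longrightarrow> sh n (-2) j = j - 2"
  unfolding sh_def by (simp add: of_nat_diff[symmetric] nat_diff_distrib)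

lemma modS: "Suc m mod 4 = (if m mod 4 = 3 then 0 else Suc (m mod 4))"
  by (simp add: mod_Suc)
lemma m4: "(j::nat) mod 4 = 0 \<or> j mod 4 = 1 \<or> j mod 4 = 2 \<or> j mod 4 = 3"
  by (induction j) (auto simp: modS)
lemma modE: "(j::nat) mod 4 = 1 \<Longrightarrow> (j + 1) mod 4 = 2" by (simp add: modS)
lemma modF: "(j::nat) mod 4 = 3 \<Longrightarrow> (j + 1) mod 4 = 0" by (simp add: modS)
lemma modB: "(j::nat) mod 4 = 1 \<Longrightarrow> 1 \<le> j \<and> (j - 1) mod 4 = 0"
  by (cases j) (auto simp: modS split: if_splits)
lemma modD: "(j::nat) mod 4 = 3 \<Longrightarrow> 1 \<le> j \<and> (j - 1) mod 4 = 2"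
  by (cases j) (auto simp: modS split: if_splits)
lemma modC: "(j::nat) mod 4 = 2 \<Longrightarrow> 2 \<le> j \<and> (j - 2) mod 4 = 0"
proof (cases j)
  case (Suc k) assume h: "j mod 4 = 2"
  then show ?thesis using Suc h by (cases k) (auto simp: modS split: if_splits)
qed simp
lemma modA: "(j::nat) mod 4 = 0 \<Longrightarrow> 2 \<le> j \<Longrightarrow> (j - 2) mod 4 = 2"
proof (cases j)
  case (Suc k) assume h: "j mod 4 = 0" "2 \<le> j"
  then show ?thesis using Suc h by (cases k) (auto simp: modS split: if_splits)
qed simp
lemma modJ: "(j::nat) mod 4 = 0 \<Longrightarrow> \<not> 2 \<le> j \<Longrightarrow> j = 0"
  by (cases j) (auto simp: modS split: if_splits)
lemma fin1: "(n::nat) mod 4 = 2 \<Longrightarrow> n = 4 * (n div 4) + 2"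
  by (metis div_mult_mod_eq mult.commute)

lemma adjI: "p \<in> A \<Longrightarrow> p \<in> S \<Longrightarrow> (\<exists>p\<in>A. p \<in> S) \<or> R"
  by blast
lemma pairI: "p \<in> set L \<Longrightarrow> q \<in> set L \<Longrightarrow> p \<noteq> q \<Longrightarrow> p \<in> S \<Longrightarrow> q \<in> S \<Longrightarrow>
   R \<or> (\<exists>p\<in>set L. \<exists>q\<in>set L. p \<noteq> q \<and> p \<in> S \<and> q \<in> S)"
  by blast

lemma UU_dom:
  assumes n: "4 \<le> n" and i: "i < 4" and j: "j < n" and nU: "(i,j) \<notin> UU n"
  shows "(\<exists>p\<in>{((i+1) mod 4, j), ((i+3) mod 4, j), (i, sh n 1 j), (i, sh n (-1) j)}. p \<in> UU n) \<or>
      (\<exists>p\<in>set (P7 n i j). \<exists>q\<in>set (P7 n i j). p \<noteq> q \<and> p \<in> UU n \<and> q \<in> UU n)"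
proof -
  have n0: "0 < n" using n by simp
  have lt: "sh n k j < n" for k using sh_lt[OF n0] .
  have m4: "j mod 4 = 0 \<or> j mod 4 = 1 \<or> j mod 4 = 2 \<or> j mod 4 = 3" by (rule m4)
  have i4: "i = 0 \<or> i = 1 \<or> i = 2 \<or> i = 3" using i by auto
  consider (a0) "j mod 4 = 0" | (a1) "j mod 4 = 1" | (a2) "j mod 4 = 2" | (a3) "j mod 4 = 3" using m4 by (elim disjE) auto
  then show ?thesis
  proof cases
    case a0
    have u0: "(0, j) \<in> UU n" using a0 j unfolding UU_def by simp
    obtain c where c: "(2, c) \<in> UU n" "c = sh n (-2) j \<or> c = sh n 2 j"
    proof (cases "2 \<le> j")
      case True
      have "(j - 2) mod 4 = 2" by (rule modA[OF a0 True])
      then have "(2, sh n (-2) j) \<in> UU n" using sh_m2'[OF True j] j unfolding UU_def by simp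
      then show ?thesis using that by blast
    next
      case False
      then have "j = 0" using modJ[OF a0] by simp
      then have "(2, sh n 2 j) \<in> UU n" using sh_p2[of j n] n unfolding UU_def by simp
      then show ?thesis using that by blast
    qed
    show ?thesis using i4
    proof (elim disjE)
      assume "i = 0" then show ?thesis using u0 nU by simp
    next
      assume "i = 1" then show ?thesis by (intro adjI[of "(0,j)"] u0) simp
    next
      assume i2: "i = 2"
      have "(0, j) \<in> set (P7 n i j)" "(2, c) \<in> set (P7 n i j)" using c(2) i2 unfolding P7_def by auto
      then show ?thesis by (intro pairI[of "(0,j)" _ "(2,c)"] u0 c(1)) simp_all
    next
      assume "i = 3" then show ?thesis by (intro adjI[of "(0,j)"] u0) simp
    qed
  next
    case a1
    have j1: "1 \<le> j" using modB[OF a1] by simp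
    have "(j - 1) mod 4 = 0" using modB[OF a1] by simp
    then have u0: "(0, sh n (-1) j) \<in> UU n" using sh_m1'[OF j1 j] j unfolding UU_def by simp
    have u2: "(2, sh n 1 j) \<in> UU n"
    proof (cases "j + 1 < n")
      case True
      have "(j + 1) mod 4 = 2" using a1 by (rule modE)
      then show ?thesis using sh_p1[OF True] True unfolding UU_def by simp
    next
      case False
      then have "j + 1 = n" using j by simp
      moreover have "(j + 1) mod 4 = 2" using a1 by (rule modE)
      ultimately show ?thesis using sh_p1w[of j n] n unfolding UU_def by simp
    qed
    show ?thesis using i4
    proof (elim disjE)
      assume "i = 0" then show ?thesis by (intro adjI[of "(0, sh n (-1) j)"] u0) simp
    next
      assume i1: "i = 1"
      have "(0, sh n (-1) j) \<in> set (P7 n i j)" "(2, sh n 1 j) \<in> set (P7 n i j)" using i1 unfolding P7_def by auto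
      then show ?thesis by (intro pairI[of "(0, sh n (-1) j)" _ "(2, sh n 1 j)"] u0 u2) simp_all
    next
      assume "i = 2" then show ?thesis by (intro adjI[of "(2, sh n 1 j)"] u2) simp
    next
      assume i1: "i = 3"
      have "(0, sh n (-1) j) \<in> set (P7 n i j)" "(2, sh n 1 j) \<in> set (P7 n i j)" using i1 unfolding P7_def by auto
      then show ?thesis by (intro pairI[of "(0, sh n (-1) j)" _ "(2, sh n 1 j)"] u0 u2) simp_all
    qed
  next
    case a2
    have u2: "(2, j) \<in> UU n" using a2 j unfolding UU_def by simp
    have j2: "2 \<le> j" using modC[OF a2] by simp
    have "(j - 2) mod 4 = 0" using modC[OF a2] by simp
    then have u0: "(0, sh n (-2) j) \<in> UU n" using sh_m2'[OF j2 j] j unfolding UU_def by simp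
    show ?thesis using i4
    proof (elim disjE)
      assume i0: "i = 0"
      have "(2, j) \<in> set (P7 n i j)" "(0, sh n (-2) j) \<in> set (P7 n i j)" using i0 unfolding P7_def by auto
      then show ?thesis by (intro pairI[of "(2, j)" _ "(0, sh n (-2) j)"] u0 u2) simp_all
    next
      assume "i = 1" then show ?thesis by (intro adjI[of "(2, j)"] u2) simp
    next
      assume "i = 2" then show ?thesis using u2 nU by simp
    next
      assume "i = 3" then show ?thesis by (intro adjI[of "(2, j)"] u2) simp
    qed
  next
    case a3
    have j1: "1 \<le> j" using modD[OF a3] by simp
    have "(j - 1) mod 4 = 2" using modD[OF a3] by simp
    then have u2: "(2, sh n (-1) j) \<in> UU n" using sh_m1'[OF j1 j] j unfolding UU_def by simp
    have u0: "(0, sh n 1 j) \<in> UU n"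
    proof (cases "j + 1 < n")
      case True
      have "(j + 1) mod 4 = 0" using a3 by (rule modF)
      then show ?thesis using sh_p1[OF True] True unfolding UU_def by simp
    next
      case False
      then have "j + 1 = n" using j by simp
      then show ?thesis using sh_p1w[of j n] n unfolding UU_def by simp
    qed
    show ?thesis using i4
    proof (elim disjE)
      assume "i = 0" then show ?thesis by (intro adjI[of "(0, sh n 1 j)"] u0) simp
    next
      assume i1: "i = 1"
      have "(2, sh n (-1) j) \<in> set (P7 n i j)" "(0, sh n 1 j) \<in> set (P7 n i j)" using i1 unfolding P7_def by auto
      then show ?thesis by (intro pairI[of "(2, sh n (-1) j)" _ "(0, sh n 1 j)"] u0 u2) simp_all
    next
      assume "i = 2" then show ?thesis by (intro adjI[of "(2, sh n (-1) j)"] u2) simp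
    next
      assume i1: "i = 3"
      have "(2, sh n (-1) j) \<in> set (P7 n i j)" "(0, sh n 1 j) \<in> set (P7 n i j)" using i1 unfolding P7_def by auto
      then show ?thesis by (intro pairI[of "(2, sh n (-1) j)" _ "(0, sh n 1 j)"] u0 u2) simp_all
    qed
  qed
qed

lemma UU_dds:
  assumes n: "4 \<le> n"
  shows "disj_dom_set (VV n) (EE n) (UU n)"
proof (rule dds_suff[OF n])
  show "UU n \<subseteq> VV n" unfolding UU_def V_eq by auto
next
  fix i j assume "i < 4" "j < n" "(i, j) \<notin> UU n"
  then show "(\<exists>p\<in>{((i+1) mod 4, j), ((i+3) mod 4, j), (i, sh n 1 j), (i, sh n (-1) j)}. p \<in> UU n) \<or>
      (\<exists>p\<in>set (P7 n i j). \<exists>q\<in>set (P7 n i j). p \<noteq> q \<and> p \<in> UU n \<and> q \<in> UU n)"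
    by (rule UU_dom[OF n])
qed


lemma even_m4: "even (j::nat) \<longleftrightarrow> j mod 4 = 0 \<or> j mod 4 = 2"
proof -
  have "j mod 2 = (j mod 4) mod 2" by (simp add: mod_mod_cancel)
  then show ?thesis using m4[of j] by (auto simp: even_iff_mod_2_eq_zero)
qed

lemma card_evens: "card {j. j < n \<and> even (j::nat)} = (n + 1) div 2"
proof (induction n)
  case 0 then show ?case by simp
next
  case (Suc n)
  have eq: "{j. j < Suc n \<and> even j} = {j. j < n \<and> even j} \<union> (if even n then {n} else {})"
    by (auto simp: less_Suc_eq)
  have "card {j. j < Suc n \<and> even j} = card {j. j < n \<and> even j} + (if even n then 1 else 0)"
    unfolding eq by (auto simp: card_insert_if)
  also have "\<dots> = (Suc n + 1) div 2" using Suc.IH by (cases "even n") (auto elim!: evenE oddE)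
  finally show ?case .
qed

lemma card_UU:
  assumes n: "4 \<le> n"
  shows "card (UU n) = (if n mod 4 = 2 then n div 2 + 1 else (n + 1) div 2)"
proof -
  define f where "f = (\<lambda>j::nat. (if j mod 4 = 0 then 0::nat else 2, j))"
  define C where "C = (if n mod 4 = 2 then {(2::nat, 0::nat)} else {})"
  have UUeq: "UU n = f ` {j. j < n \<and> even j} \<union> C"
  proof
    show "UU n \<subseteq> f ` {j. j < n \<and> even j} \<union> C"
    proof
      fix p assume "p \<in> UU n"
      then obtain i j where p: "p = (i,j)" "i < 4" "j < n"
        "(i = 0 \<and> j mod 4 = 0) \<or> (i = 2 \<and> j mod 4 = 2) \<or> (n mod 4 = 2 \<and> i = 2 \<and> j = 0)"
        unfolding UU_def by auto
      from p(4) show "p \<in> f ` {j. j < n \<and> even j} \<union> C"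
      proof (elim disjE)
        assume h: "i = 0 \<and> j mod 4 = 0"
        then have "p = f j" "even j" using p even_m4[of j] unfolding f_def by auto
        then show ?thesis using p(3) by auto
      next
        assume h: "i = 2 \<and> j mod 4 = 2"
        then have "p = f j" "even j" using p even_m4[of j] unfolding f_def by auto
        then show ?thesis using p(3) by auto
      next
        assume "n mod 4 = 2 \<and> i = 2 \<and> j = 0"
        then show ?thesis using p unfolding C_def by auto
      qed
    qed
  next
    show "f ` {j. j < n \<and> even j} \<union> C \<subseteq> UU n"
    proof
      fix p assume "p \<in> f ` {j. j < n \<and> even j} \<union> C"
      then show "p \<in> UU n"
      proof
        assume "p \<in> f ` {j. j < n \<and> even j}"
        then obtain j where j: "j < n" "even j" "p = f j" by auto
        then show ?thesis using even_m4[of j] unfolding f_def UU_def by auto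
      next
        assume "p \<in> C"
        then show ?thesis using n unfolding C_def UU_def by (auto split: if_splits)
      qed
    qed
  qed
  have inj: "inj_on f {j. j < n \<and> even j}" unfolding f_def inj_on_def by auto
  have disj: "f ` {j. j < n \<and> even j} \<inter> C = {}" unfolding f_def C_def by auto
  have cardC: "card C = (if n mod 4 = 2 then 1 else 0)" unfolding C_def by simp
  have "card (UU n) = card (f ` {j. j < n \<and> even j}) + card C"
  proof -
    have finC: "finite C" unfolding C_def by simp
    show ?thesis unfolding UUeq by (rule card_Un_disjoint[OF _ finC disj]) simp
  qed
  also have "\<dots> = (n + 1) div 2 + (if n mod 4 = 2 then 1 else 0)"
    using card_image[OF inj] card_evens cardC by simp
  also have "\<dots> = (if n mod 4 = 2 then n div 2 + 1 else (n + 1) div 2)"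
  proof (cases "n mod 4 = 2")
    case True
    then have "even n" using even_m4 by blast
    then have "(n + 1) div 2 = n div 2" by (auto elim!: evenE)
    then show ?thesis using True by simp
  qed simp
  finally show ?thesis .
qed

theorem theorem3:
  fixes n :: nat
  assumes "n \<ge> 4"
  shows "disj_dom_num (cart_V (cycle_V 4) (cycle_V n)) (cart_E (cycle_E 4) (cycle_E n)) =
    (if n mod 4 = 2 then n div 2 + 1 else (n + 1) div 2)"
  unfolding disj_dom_num_def
proof (rule Least_equality)
  show "\<exists>S. disj_dom_set (VV n) (EE n) S \<and> card S = (if n mod 4 = 2 then n div 2 + 1 else (n + 1) div 2)"
    using UU_dds[OF assms] card_UU[OF assms] by blast
next
  fix y assume "\<exists>S. disj_dom_set (VV n) (EE n) S \<and> card S = y"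
  then obtain S where S: "disj_dom_set (VV n) (EE n) S" "card S = y" by blast
  from lower[OF assms S(1)] S(2) have L: "n \<le> 2 * y" "n mod 4 = 2 \<Longrightarrow> n \<noteq> 2 * y" by auto
  show "(if n mod 4 = 2 then n div 2 + 1 else (n + 1) div 2) \<le> y"
  proof (cases "n mod 4 = 2")
    case True
    then have "even n" using even_m4 by blast
    then obtain k where k: "n = 2 * k" by (auto elim!: evenE)
    then have "k < y" using L True by auto
    then show ?thesis using True k by simp
  next
    case False
    have "(n + 1) div 2 \<le> (2 * y + 1) div 2" using L(1) by (intro div_le_mono) simp
    then show ?thesis using False by simp
  qed
qed


end
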